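(* Let $a:\mathbb{Z}\curvearrowright X$ be a free Borel action of $\mathbb{Z}$ on a standard Borel space $X$, and let $S=\{1,-1\}$. Suppose $V\subseteq X$ is a Borel set such that every injective $G(a,S)$-ray contains infinitely many edges with both endpoints in $V$. Then there is a Borel edge coloring of $G(a,S)$ with colors $\{1,2,3\}$ such that the color $3$ is used only on edges with both endpoints in $V$.
   Context: $G(a,S)$ is the graph on $X$ with $x,y$ adjacent iff $y=x+1$ or $y=x-1$ under the action. An injective $G$-ray is an injective sequence $x_0,x_1,\dots$ with each $(x_i,x_{i+1})$ an edge. An edge coloring gives distinct colors to edges sharing a vertex. *)

theory Defs
  imports "HOL-Analysis.Analysis"
begin

text \<open>A standard Borel space is modelled (up to Borel isomorphism) as a Polish space
  type with its Borel sigma-algebra.\<close>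

definition borel_Z_action :: "(int \<Rightarrow> 'a::topological_space \<Rightarrow> 'a) \<Rightarrow> bool" where
  "borel_Z_action a \<longleftrightarrow> a 0 = id \<and> (\<forall>m n. a (m + n) = a m \<circ> a n)
     \<and> (\<forall>n. a n \<in> borel_measurable borel)"

definition free_action :: "(int \<Rightarrow> 'a \<Rightarrow> 'a) \<Rightarrow> bool" where
  "free_action a \<longleftrightarrow> (\<forall>n x. a n x = x \<longrightarrow> n = 0)"

definition G_adj :: "(int \<Rightarrow> 'a \<Rightarrow> 'a) \<Rightarrow> 'a \<Rightarrow> 'a \<Rightarrow> bool" where
  "G_adj a x y \<longleftrightarrow> y = a 1 x \<or> y = a (-1) x"

definition injective_ray :: "(int \<Rightarrow> 'a \<Rightarrow> 'a) \<Rightarrow> (nat \<Rightarrow> 'a) \<Rightarrow> bool" where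
  "injective_ray a r \<longleftrightarrow> inj r \<and> (\<forall>i. G_adj a (r i) (r (Suc i)))"

definition edge_coloring :: "(int \<Rightarrow> 'a \<Rightarrow> 'a) \<Rightarrow> ('a \<times> 'a \<Rightarrow> 'c) \<Rightarrow> bool" where
  "edge_coloring a c \<longleftrightarrow>
     (\<forall>x y. G_adj a x y \<longrightarrow> c (x, y) = c (y, x)) \<and>
     (\<forall>x y z. G_adj a x y \<and> G_adj a x z \<and> y \<noteq> z \<longrightarrow> c (x, y) \<noteq> c (x, z))"

end

theory Submission imports Defs begin

definition Wset :: "(int \<Rightarrow> 'a \<Rightarrow> 'a) \<Rightarrow> 'a set \<Rightarrow> 'a set" where
  "Wset a V = {x. x \<in> V \<and> a 1 x \<in> V}"

definition c0 :: "(int \<Rightarrow> 'a \<Rightarrow> 'a) \<Rightarrow> (nat \<Rightarrow> 'a set) \<Rightarrow> 'a \<Rightarrow> nat" where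
  "c0 a U x = (LEAST n. x \<in> U n \<and> a 1 x \<notin> U n \<and> a (-1) x \<notin> U n)"

fun Iset :: "(int \<Rightarrow> 'a \<Rightarrow> 'a) \<Rightarrow> 'a set \<Rightarrow> (nat \<Rightarrow> 'a set) \<Rightarrow> nat \<Rightarrow> 'a set" where
  "Iset a V U 0 = {x \<in> Wset a V. c0 a U x = 0}"
| "Iset a V U (Suc n) = Iset a V U n \<union>
     {x \<in> Wset a V. c0 a U x = Suc n \<and> a 1 x \<notin> Iset a V U n \<and> a (-1) x \<notin> Iset a V U n}"

definition Mset where "Mset a V U = (\<Union>n. Iset a V U n)"

definition kx where "kx a V U x = (LEAST k. k \<ge> (1::nat) \<and> a (- int k) x \<in> Mset a V U)"

definition col :: "(int \<Rightarrow> 'a \<Rightarrow> 'a) \<Rightarrow> 'a set \<Rightarrow> (nat \<Rightarrow> 'a set) \<Rightarrow> 'a \<Rightarrow> nat" where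
  "col a V U x = (if x \<in> Mset a V U then 3 else if odd (kx a V U x) then 1 else 2)"

definition cf where
  "cf a V U p = (if snd p = a 1 (fst p) then col a V U (fst p) else col a V U (snd p))"

lemma act: assumes "borel_Z_action a" shows "a m (a n x) = a (m + n) x" "a 0 x = x"
  using assms unfolding borel_Z_action_def by auto

lemma c0_ex:
  assumes "\<And>x. \<exists>n. x \<in> U n \<and> a 1 x \<notin> U n \<and> a (-1) x \<notin> U n"
  shows "x \<in> U (c0 a U x) \<and> a 1 x \<notin> U (c0 a U x) \<and> a (-1) x \<notin> U (c0 a U x)"
  unfolding c0_def using assms[of x] by (rule LeastI_ex)

lemma c0_adj:
  assumes "borel_Z_action a" "\<And>x. \<exists>n. x \<in> U n \<and> a 1 x \<notin> U n \<and> a (-1) x \<notin> U n"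
  shows "c0 a U (a 1 x) \<noteq> c0 a U x"
proof
  assume e: "c0 a U (a 1 x) = c0 a U x"
  have "a (-1) (a 1 x) = x" using act[OF assms(1)] by simp
  then show False using c0_ex[OF assms(2), of x] c0_ex[OF assms(2), of "a 1 x"] e by auto
qed

lemma I_le: "x \<in> Iset a V U n \<Longrightarrow> c0 a U x \<le> n"
  by (induction n) auto

lemma I_W: "x \<in> Iset a V U n \<Longrightarrow> x \<in> Wset a V"
  by (induction n) auto

lemma I_mono: "m \<le> n \<Longrightarrow> Iset a V U m \<subseteq> Iset a V U n"
proof (induction n)
  case 0 then show ?case by simp
next
  case (Suc n) then show ?case by (cases "m = Suc n") auto
qed

lemma I_self: "x \<in> Iset a V U n \<Longrightarrow> x \<in> Iset a V U (c0 a U x)"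
  by (induction n) auto

lemma I_new: "x \<in> Iset a V U (Suc m) \<Longrightarrow> c0 a U x = Suc m \<Longrightarrow>
   a 1 x \<notin> Iset a V U m \<and> a (-1) x \<notin> Iset a V U m"
  using I_le[of x a V U m] by auto

lemma M_indep:
  assumes "borel_Z_action a" "\<And>x. \<exists>n. x \<in> U n \<and> a 1 x \<notin> U n \<and> a (-1) x \<notin> U n"
    and "x \<in> Mset a V U" "a 1 x \<in> Mset a V U"
  shows False
proof -
  let ?y = "a 1 x"
  have yx: "a (-1) ?y = x" using act[OF assms(1)] by simp
  have d: "c0 a U ?y \<noteq> c0 a U x" by (rule c0_adj[OF assms(1,2)])
  have xs: "x \<in> Iset a V U (c0 a U x)" and ys: "?y \<in> Iset a V U (c0 a U ?y)"
    using assms(3,4) I_self unfolding Mset_def by auto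
  show False
  proof (cases "c0 a U x < c0 a U ?y")
    case True
    then obtain m where m: "c0 a U ?y = Suc m" "c0 a U x \<le> m" by (cases "c0 a U ?y") auto
    have "a (-1) ?y \<notin> Iset a V U m" using I_new[of ?y a V U m] ys m by auto
    moreover have "x \<in> Iset a V U m" using xs I_mono[OF m(2), of a V U] by blast
    ultimately show False using yx by simp
  next
    case False
    then have "c0 a U ?y < c0 a U x" using d by simp
    then obtain m where m: "c0 a U x = Suc m" "c0 a U ?y \<le> m" by (cases "c0 a U x") auto
    have "?y \<notin> Iset a V U m" using I_new[of x a V U m] xs m by auto
    moreover have "?y \<in> Iset a V U m" using ys I_mono[OF m(2), of a V U] by blast
    ultimately show False by simp
  qed
qed

lemma M_max:
  assumes "w \<in> Wset a V" "w \<notin> Mset a V U"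
  shows "a 1 w \<in> Mset a V U \<or> a (-1) w \<in> Mset a V U"
proof (cases "c0 a U w")
  case 0
  then have "w \<in> Iset a V U 0" using assms by simp
  then show ?thesis using assms unfolding Mset_def by blast
next
  case (Suc m)
  have "w \<notin> Iset a V U (Suc m)" using assms unfolding Mset_def by blast
  then have "a 1 w \<in> Iset a V U m \<or> a (-1) w \<in> Iset a V U m" using Suc assms by auto
  then show ?thesis unfolding Mset_def by blast
qed

lemma M_W: "x \<in> Mset a V U \<Longrightarrow> x \<in> Wset a V"
  unfolding Mset_def using I_W by auto

lemma M_left:
  assumes A: "borel_Z_action a" and F: "free_action a"
    and R: "\<And>r. injective_ray a r \<Longrightarrow> infinite {i. r i \<in> V \<and> r (Suc i) \<in> V}"
  shows "\<exists>k\<ge>1. a (- int k) x \<in> Mset a V U"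
proof -
  define r where "r i = a (- int i) x" for i
  have "inj r"
  proof (rule injI)
    fix i j assume "r i = r j"
    then have "a (int j) (r i) = a (int j) (r j)" by simp
    then have "a (int j - int i) x = x" unfolding r_def using act[OF A] by simp
    then show "i = j" using F unfolding free_action_def by force
  qed
  moreover have "G_adj a (r i) (r (Suc i))" for i
    unfolding G_adj_def r_def using act[OF A] by (simp add: algebra_simps)
  ultimately have "injective_ray a r" unfolding injective_ray_def by simp
  from R[OF this] obtain i where i: "i \<ge> 1" "r i \<in> V" "r (Suc i) \<in> V"
    unfolding infinite_nat_iff_unbounded_le by blast
  define w where "w = r (Suc i)"
  have w1: "a 1 w = r i"
    unfolding w_def r_def using act[OF A] by (simp add: algebra_simps)
  have "a (-1) w = a (-1 + - int (Suc i)) x" unfolding w_def r_def using act[OF A] by simp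
  also have "\<dots> = r (Suc (Suc i))" unfolding r_def by (rule arg_cong[where f="\<lambda>k. a k x"]) simp
  finally have w2: "a (-1) w = r (Suc (Suc i))" .
  have "w \<in> Wset a V" using i w1 unfolding Wset_def w_def by simp
  then have "w \<in> Mset a V U \<or> a 1 w \<in> Mset a V U \<or> a (-1) w \<in> Mset a V U"
    using M_max[of w a V U] by blast
  then show ?thesis
  proof (elim disjE)
    assume "w \<in> Mset a V U" then show ?thesis unfolding w_def r_def by (intro exI[of _ "Suc i"]) simp
  next
    assume "a 1 w \<in> Mset a V U" then show ?thesis using i(1) unfolding w1 r_def by blast
  next
    assume "a (-1) w \<in> Mset a V U" then show ?thesis unfolding w2 r_def by (intro exI[of _ "Suc (Suc i)"]) simp
  qed
qed

lemma kx_suc: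
  assumes A: "borel_Z_action a" and nx: "x \<notin> Mset a V U" and ex: "\<exists>k\<ge>1. a (- int k) x \<in> Mset a V U"
  shows "kx a V U (a 1 x) = Suc (kx a V U x)"
proof -
  have e: "a (- int (Suc k)) (a 1 x) = a (- int k) x" for k
    using act[OF A] by (simp add: algebra_simps)
  from ex obtain k where k: "k \<ge> 1" "a (- int k) x \<in> Mset a V U" by blast
  have "(LEAST n. n \<ge> (1::nat) \<and> a (- int n) (a 1 x) \<in> Mset a V U)
     = Suc (LEAST m. Suc m \<ge> 1 \<and> a (- int (Suc m)) (a 1 x) \<in> Mset a V U)"
    by (rule Least_Suc[of _ "Suc k"]) (use k e in auto)
  also have "(\<lambda>m. Suc m \<ge> 1 \<and> a (- int (Suc m)) (a 1 x) \<in> Mset a V U)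
      = (\<lambda>m. m \<ge> 1 \<and> a (- int m) x \<in> Mset a V U)"
  proof
    fix m show "(Suc m \<ge> 1 \<and> a (- int (Suc m)) (a 1 x) \<in> Mset a V U) = (m \<ge> 1 \<and> a (- int m) x \<in> Mset a V U)"
      using e[of m] nx act(2)[OF A, of x] by (cases m) auto
  qed
  finally show ?thesis unfolding kx_def .
qed

lemma col_adj:
  assumes A: "borel_Z_action a" and F: "free_action a"
    and R: "\<And>r. injective_ray a r \<Longrightarrow> infinite {i. r i \<in> V \<and> r (Suc i) \<in> V}"
    and H: "\<And>x. \<exists>n. x \<in> U n \<and> a 1 x \<notin> U n \<and> a (-1) x \<notin> U n"
  shows "col a V U z \<noteq> col a V U (a 1 z)"
proof -
  have ni: "\<not> (z \<in> Mset a V U \<and> a 1 z \<in> Mset a V U)" using M_indep[OF A H] by blast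
  show ?thesis
  proof (cases "z \<in> Mset a V U \<or> a 1 z \<in> Mset a V U")
    case True then show ?thesis using ni unfolding col_def by auto
  next
    case False
    then have "kx a V U (a 1 z) = Suc (kx a V U z)" using kx_suc[OF A _ M_left[OF A F R]] by blast
    then show ?thesis using False unfolding col_def by auto
  qed
qed

lemma meas_all:
  fixes a :: "int \<Rightarrow> 'a::polish_space \<Rightarrow> 'a"
  assumes am: "\<And>n. a n \<in> borel_measurable borel" and Um: "\<And>n. U n \<in> sets borel"
    and Vm: "V \<in> sets borel"
  shows "cf a V U \<in> measurable borel (count_space UNIV)"
proof -
  note [measurable] = am Um Vm
  have Wm[measurable]: "Wset a V \<in> sets borel"
  proof -
    have "Wset a V = {x \<in> space borel. x \<in> V \<and> a 1 x \<in> V}" unfolding Wset_def by simp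
    also have "\<dots> \<in> sets borel" by measurable
    finally show ?thesis .
  qed
  have c0m[measurable]: "c0 a U \<in> measurable borel (count_space UNIV)"
    unfolding c0_def[abs_def] by measurable
  have Im: "Iset a V U n \<in> sets borel" for n
  proof (induction n)
    case 0
    have "Iset a V U 0 = {x \<in> space borel. x \<in> Wset a V \<and> c0 a U x = 0}" by simp
    also have "\<dots> \<in> sets borel" by measurable
    finally show ?case .
  next
    case (Suc n)
    note [measurable] = Suc
    have "Iset a V U (Suc n) = {x \<in> space borel. x \<in> Iset a V U n \<or> (x \<in> Wset a V \<and> c0 a U x = Suc n
       \<and> a 1 x \<notin> Iset a V U n \<and> a (-1) x \<notin> Iset a V U n)}" by auto
    also have "\<dots> \<in> sets borel" by measurable
    finally show ?case .
  qed
  have Mm[measurable]: "Mset a V U \<in> sets borel" unfolding Mset_def using Im by auto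
  have kxm[measurable]: "kx a V U \<in> measurable borel (count_space UNIV)"
    unfolding kx_def[abs_def] by measurable
  have colm[measurable]: "col a V U \<in> measurable borel (count_space UNIV)"
    unfolding col_def[abs_def] by measurable
  have fm[measurable]: "fst \<in> borel_measurable (borel :: ('a \<times> 'a) measure)"
    by (intro borel_measurable_continuous_onI continuous_intros)
  have sm[measurable]: "snd \<in> borel_measurable (borel :: ('a \<times> 'a) measure)"
    by (intro borel_measurable_continuous_onI continuous_intros)
  show ?thesis unfolding cf_def[abs_def] by measurable
qed

theorem lemma2:
  fixes a :: "int \<Rightarrow> 'a::polish_space \<Rightarrow> 'a" and V :: "'a set"
  assumes "borel_Z_action a" and "free_action a"
    and "V \<in> sets borel"
    and "\<And>r. injective_ray a r \<Longrightarrow> infinite {i. r i \<in> V \<and> r (Suc i) \<in> V}"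
  shows "\<exists>c :: 'a \<times> 'a \<Rightarrow> nat.
           c \<in> measurable borel (count_space UNIV) \<and>
           edge_coloring a c \<and>
           (\<forall>x y. G_adj a x y \<longrightarrow> c (x, y) \<in> {1, 2, 3}) \<and>
           (\<forall>x y. G_adj a x y \<and> c (x, y) = 3 \<longrightarrow> x \<in> V \<and> y \<in> V)"
proof -
  note A = assms(1) and F = assms(2) and R = assms(4)
  obtain B :: "'a set set" where Bc: "countable B" and Bb: "topological_basis B"
    using ex_countable_basis by blast
  have "B \<noteq> {}"
  proof
    assume "B = {}"
    obtain z :: 'a where True by blast
    show False using topological_basisE[OF Bb open_UNIV, of z] \<open>B = {}\<close> by auto
  qed
  define U where "U = from_nat_into B"
  have H: "\<exists>n. x \<in> U n \<and> a 1 x \<notin> U n \<and> a (-1) x \<notin> U n" for x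
  proof -
    have "open (- {a 1 x, a (-1) x})" by (intro open_Compl finite_imp_closed) simp
    moreover have "x \<in> - {a 1 x, a (-1) x}"
      using F unfolding free_action_def by (metis ComplI insert_iff empty_iff zero_neq_one neg_equal_0_iff_equal)
    ultimately obtain O1 where "O1 \<in> B" "x \<in> O1" "O1 \<subseteq> - {a 1 x, a (-1) x}"
      using topological_basisE[OF Bb] by metis
    moreover obtain n where "O1 = U n" using \<open>O1 \<in> B\<close> range_from_nat_into[OF \<open>B \<noteq> {}\<close> Bc]
      unfolding U_def by (metis rangeE)
    ultimately show ?thesis by auto
  qed
  have Um: "U n \<in> sets borel" for n
  proof -
    have "U n \<in> B" unfolding U_def using from_nat_into[OF \<open>B \<noteq> {}\<close>] .
    then show ?thesis using topological_basis_open[OF Bb] by auto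
  qed
  have am: "a n \<in> borel_measurable borel" for n using A unfolding borel_Z_action_def by blast
  have inv1: "a (-1) (a 1 x) = x" "a 1 (a (-1) x) = x" for x using act[OF A] by simp_all
  have ne: "a 1 x \<noteq> a (-1) x" for x
  proof
    assume "a 1 x = a (-1) x"
    then have "a 1 (a 1 x) = x" using inv1 by metis
    then have "a 2 x = x" using act[OF A] by simp
    then show False using F unfolding free_action_def by force
  qed
  have ne2: "a 1 (a 1 x) \<noteq> x" for x using ne[of "a 1 x"] inv1 by metis
  have cadj: "col a V U z \<noteq> col a V U (a 1 z)" for z by (rule col_adj[OF A F R H])
  let ?c = "cf a V U"
  have c1: "?c (x, a 1 x) = col a V U x" for x unfolding cf_def by simp
  have c2: "?c (x, a (-1) x) = col a V U (a (-1) x)" for x unfolding cf_def using ne[of x] by simp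
  have c3: "?c (a 1 x, x) = col a V U x" for x unfolding cf_def using ne2[of x] by simp
  have c4: "?c (a (-1) x, x) = col a V U (a (-1) x)" for x unfolding cf_def using inv1 by simp
  have adj: "G_adj a x y \<longleftrightarrow> y = a 1 x \<or> y = a (-1) x" for x y unfolding G_adj_def by simp
  have ec: "edge_coloring a ?c"
    unfolding edge_coloring_def
  proof (intro conjI allI impI)
    fix x y assume "G_adj a x y"
    then show "?c (x, y) = ?c (y, x)" unfolding adj using c1 c2 c3 c4 by auto
  next
    fix x y z assume h: "G_adj a x y \<and> G_adj a x z \<and> y \<noteq> z"
    have k: "col a V U x \<noteq> col a V U (a (-1) x)" using cadj[of "a (-1) x"] inv1 by metis
    show "?c (x, y) \<noteq> ?c (x, z)" using h k unfolding adj using c1 c2 by auto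
  qed
  have cols: "col a V U x \<in> {1,2,3}" for x unfolding col_def by auto
  have col3: "col a V U x = 3 \<Longrightarrow> x \<in> V \<and> a 1 x \<in> V" for x
    unfolding col_def using M_W[of x a V U] unfolding Wset_def by (auto split: if_splits)
  have m: "?c \<in> measurable borel (count_space UNIV)" by (rule meas_all[OF am Um assms(3)])
  have p3: "\<forall>x y. G_adj a x y \<longrightarrow> ?c (x, y) \<in> {1,2,3}"
    unfolding adj using c1 c2 cols by (metis (no_types))
  have p4: "\<forall>x y. G_adj a x y \<and> ?c (x, y) = 3 \<longrightarrow> x \<in> V \<and> y \<in> V"
    unfolding adj using c1 c2 col3 inv1 by metis
  show ?thesis using m ec p3 p4 by blast
qed

end
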